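(* Every element of ${\rm BrM}({\rm G}_2)$ can be written in one of the following forms: (i) $\delta^k u e_i v w$ with $i\in\{0,1\}$, $u\in D_i$, $v\in K_i$, $w\in D_i^{\rm op}$ and $k\in\mathbb{Z}$; or (ii) $\delta^k a$ with $a\in W({\rm G}_2)$ and $k\in\mathbb{Z}$. In particular, ${\rm Br}({\rm G}_2)$ is spanned over $\mathbb{Z}[\delta^{\pm1}]$ by $39$ elements.
   Context: Let $\delta$ be an indeterminate. ${\rm Br}({\rm G}_2)$ is the $\mathbb{Z}[\delta^{\pm1}]$-algebra generated by $r_0,r_1,e_0,e_1$ subject to the following relations: - $r_0^2=r_1^2=1$; - $r_ie_i=e_ir_i=e_i$ for $i=0,1$; - $e_0^2=\delta^3e_0$ and $e_1^2=\delta e_1$; - $r_0e_1e_0=r_1e_0$ and $e_0e_1r_0=e_0r_1$; - $e_1r_0e_1r_0e_1=e_1$ and $e_1r_0e_1r_0r_1=e_1r_0r_1r_0$; - $e_0r_1e_0=\delta^2e_0$; - $r_1r_0e_1r_0e_1=r_0r_1r_0e_1$; - $(r_1r_0)^6=1$. ${\rm BrM}({\rm G}_2)$ is the submonoid of the multiplicative monoid of ${\rm Br}({\rm G}_2)$ generated by $\delta,\delta^{-1},r_0,r_1,e_0,e_1$. Let $\Psi$ be a root system of type ${\rm G}_2$ with simple roots $\beta_0$ (short) and $\beta_1$ (long), and positive roots $\Psi^+$. $W({\rm G}_2)$ is generated by the reflections $s_0,s_1$ in $\beta_0,\beta_1$. It acts on $\Psi^+$ by $w\cdot\beta=$ the unique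 element of $\Psi^+\cap\{\pm w\beta\}$. The subgroup of units generated by $r_0,r_1$ is isomorphic to $W({\rm G}_2)$ via $r_i\mapsto s_i$, and elements of $W({\rm G}_2)$ are identified with their images. For $i\in\{0,1\}$: - $N_i$ is the stabilizer of $\beta_i$ in $W({\rm G}_2)$ under this action; - $D_i$ is a set of left coset representatives for $N_i$ in $W({\rm G}_2)$; - $K_0=\{1\}$, and $K_1$ is the subgroup generated by $r_0r_1r_0r_1r_0$; - $D_i^{\rm op}=\{d^{\rm op}\mid d\in D_i\}$, where ${\rm op}$ is the anti-involution of ${\rm Br}({\rm G}_2)$ fixing $\delta,r_0,r_1,e_0,e_1$ (so $d^{\rm op}=d^{-1}$ for $d\in W({\rm G}_2)$). *)

theory Defs
  imports Main
begin

text \<open>Roots are written in coordinates (a,b) meaning a*beta0 + b*beta1,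
  beta0 short, beta1 long.\<close>

definition g2_refl :: "nat \<Rightarrow> int \<times> int \<Rightarrow> int \<times> int" where
  "g2_refl i = (if i = 0 then (\<lambda>(a, b). (3 * b - a, b)) else (\<lambda>(a, b). (a, a - b)))"

text \<open>Action of a word [i1,...,ik] as s_{i1} o ... o s_{ik} (letter 0 = s0, any other = s1).\<close>
definition g2_word :: "nat list \<Rightarrow> int \<times> int \<Rightarrow> int \<times> int" where
  "g2_word ws = foldr (\<lambda>i f. g2_refl i \<circ> f) ws id"

definition G2_W :: "(int \<times> int \<Rightarrow> int \<times> int) set" where
  "G2_W = {g2_word ws | ws. True}"

definition G2_pos :: "(int \<times> int) set" where
  "G2_pos = {(1,0), (0,1), (1,1), (2,1), (3,1), (3,2)}"

definition g2_simple :: "nat \<Rightarrow> int \<times> int" where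
  "g2_simple i = (if i = 0 then (1, 0) else (0, 1))"

definition g2_act :: "(int \<times> int \<Rightarrow> int \<times> int) \<Rightarrow> int \<times> int \<Rightarrow> int \<times> int" where
  "g2_act w \<beta> = (THE \<gamma>. \<gamma> \<in> G2_pos \<and> (\<gamma> = w \<beta> \<or> \<gamma> = (- fst (w \<beta>), - snd (w \<beta>))))"

definition G2_N :: "nat \<Rightarrow> (int \<times> int \<Rightarrow> int \<times> int) set" where
  "G2_N i = {w \<in> G2_W. g2_act w (g2_simple i) = g2_simple i}"

definition left_coset_reps :: "(int \<times> int \<Rightarrow> int \<times> int) set \<Rightarrow> (int \<times> int \<Rightarrow> int \<times> int) set \<Rightarrow> bool" where
  "left_coset_reps D N \<longleftrightarrow> D \<subseteq> G2_W \<and> (\<forall>w\<in>G2_W. \<exists>!d. d \<in> D \<and> (\<exists>n\<in>N. w = d \<circ> n))"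

definition G2_K :: "nat \<Rightarrow> (int \<times> int \<Rightarrow> int \<times> int) set" where
  "G2_K i = (if i = 0 then {id} else {(g2_word [0,1,0,1,0]) ^^ n | n. True})"

definition op_set :: "(int \<times> int \<Rightarrow> int \<times> int) set \<Rightarrow> (int \<times> int \<Rightarrow> int \<times> int) set" where
  "op_set D = {w \<in> G2_W. \<exists>d\<in>D. w \<circ> d = id}"

definition alg_word :: "'a::monoid_mult \<Rightarrow> 'a \<Rightarrow> nat list \<Rightarrow> 'a" where
  "alg_word r0 r1 ws = prod_list (map (\<lambda>i. if i = 0 then r0 else r1) ws)"

definition br_G2_rels :: "'a::ring_1 \<Rightarrow> 'a \<Rightarrow> 'a \<Rightarrow> 'a \<Rightarrow> 'a \<Rightarrow> 'a \<Rightarrow> bool" where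
  "br_G2_rels d d' r0 r1 e0 e1 \<longleftrightarrow>
     d * d' = 1 \<and> d' * d = 1 \<and> (\<forall>x. d * x = x * d) \<and>
     r0 * r0 = 1 \<and> r1 * r1 = 1 \<and>
     r0 * e0 = e0 \<and> e0 * r0 = e0 \<and> r1 * e1 = e1 \<and> e1 * r1 = e1 \<and>
     e0 * e0 = d ^ 3 * e0 \<and> e1 * e1 = d * e1 \<and>
     r0 * e1 * e0 = r1 * e0 \<and> e0 * e1 * r0 = e0 * r1 \<and>
     e1 * r0 * e1 * r0 * e1 = e1 \<and> e1 * r0 * e1 * r0 * r1 = e1 * r0 * r1 * r0 \<and>
     e0 * r1 * e0 = d ^ 2 * e0 \<and>
     r1 * r0 * e1 * r0 * e1 = r0 * r1 * r0 * e1 \<and>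
     (r1 * r0) ^ 6 = 1"

definition dpow :: "'a::monoid_mult \<Rightarrow> 'a \<Rightarrow> int \<Rightarrow> 'a" where
  "dpow d d' k = (if k \<ge> 0 then d ^ nat k else d' ^ nat (- k))"

inductive_set brM :: "'a::monoid_mult \<Rightarrow> 'a \<Rightarrow> 'a \<Rightarrow> 'a \<Rightarrow> 'a \<Rightarrow> 'a \<Rightarrow> 'a set"
  for d d' r0 r1 e0 e1 where
  one: "1 \<in> brM d d' r0 r1 e0 e1"
| gen: "x \<in> brM d d' r0 r1 e0 e1 \<Longrightarrow> g \<in> {d, d', r0, r1, e0, e1} \<Longrightarrow> g * x \<in> brM d d' r0 r1 e0 e1"

inductive_set laurent_scalars :: "'a::ring_1 \<Rightarrow> 'a \<Rightarrow> 'a set" for d d' where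
  one: "1 \<in> laurent_scalars d d'"
| d: "d \<in> laurent_scalars d d'"
| d': "d' \<in> laurent_scalars d d'"
| neg: "x \<in> laurent_scalars d d' \<Longrightarrow> - x \<in> laurent_scalars d d'"
| add: "x \<in> laurent_scalars d d' \<Longrightarrow> y \<in> laurent_scalars d d' \<Longrightarrow> x + y \<in> laurent_scalars d d'"
| mult: "x \<in> laurent_scalars d d' \<Longrightarrow> y \<in> laurent_scalars d d' \<Longrightarrow> x * y \<in> laurent_scalars d d'"

inductive_set gen_alg :: "'a::ring_1 \<Rightarrow> 'a \<Rightarrow> 'a \<Rightarrow> 'a \<Rightarrow> 'a \<Rightarrow> 'a \<Rightarrow> 'a set"
  for d d' r0 r1 e0 e1 where
  base: "g \<in> {1, d, d', r0, r1, e0, e1} \<Longrightarrow> g \<in> gen_alg d d' r0 r1 e0 e1"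
| neg: "x \<in> gen_alg d d' r0 r1 e0 e1 \<Longrightarrow> - x \<in> gen_alg d d' r0 r1 e0 e1"
| add: "x \<in> gen_alg d d' r0 r1 e0 e1 \<Longrightarrow> y \<in> gen_alg d d' r0 r1 e0 e1 \<Longrightarrow> x + y \<in> gen_alg d d' r0 r1 e0 e1"
| mult: "x \<in> gen_alg d d' r0 r1 e0 e1 \<Longrightarrow> y \<in> gen_alg d d' r0 r1 e0 e1 \<Longrightarrow> x * y \<in> gen_alg d d' r0 r1 e0 e1"

end

theory Submission
  imports Defs
begin

lemma dpow_zero: "dpow d d' 0 = 1"
  by (simp add: dpow_def)


definition lt :: "'a \<Rightarrow> 'a \<Rightarrow> 'a \<Rightarrow> 'a \<Rightarrow> nat \<Rightarrow> 'a::monoid_mult" where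
  "lt r0 r1 e0 e1 i = (if i = 0 then r0 else if i = 1 then r1 else if i = 2 then e0 else e1)"

definition w4 :: "'a \<Rightarrow> 'a \<Rightarrow> 'a \<Rightarrow> 'a \<Rightarrow> nat list \<Rightarrow> 'a::monoid_mult" where
  "w4 r0 r1 e0 e1 ws = prod_list (map (lt r0 r1 e0 e1) ws)"

definition nfw :: "nat list list" where
  "nfw = [[], [0], [1], [2], [3], [0,1], [0,3], [1,0], [1,2], [2,1], [2,3], [3,0], [3,2], [0,1,0], [0,3,0], [1,0,1], [1,0,3], [1,2,1], [1,2,3], [3,0,1], [3,0,3], [3,2,1], [3,2,3], [0,1,0,1], [0,1,0,3], [0,3,0,1], [0,3,0,3], [1,0,1,0], [1,0,3,0], [3,0,1,0], [3,0,3,0], [0,1,0,1,0], [0,1,0,3,0], [0,3,0,1,0], [0,3,0,3,0], [1,0,1,0,1], [1,0,3,0,1], [0,1,0,1,0,1], [0,1,0,3,0,1]]"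

definition tab0 :: "(int \<times> nat) list" where
  "tab0 = [(0,1), (0,0), (0,5), (0,3), (0,6), (0,2), (0,4), (0,13), (0,12), (0,9), (0,10), (0,14), (0,8), (0,7), (0,11), (0,23), (0,24), (0,21), (0,22), (0,25), (0,26), (0,17), (0,18), (0,15), (0,16), (0,19), (0,20), (0,31), (0,32), (0,33), (0,34), (0,27), (0,28), (0,29), (0,30), (0,37), (0,38), (0,35), (0,36)]"

definition tab1 :: "(int \<times> nat) list" where
  "tab1 = [(0,2), (0,7), (0,0), (0,8), (0,4), (0,15), (0,16), (0,1), (0,3), (0,17), (0,18), (0,11), (0,12), (0,27), (0,28), (0,5), (0,6), (0,9), (0,10), (0,19), (0,20), (0,21), (0,22), (0,35), (0,26), (0,36), (0,24), (0,13), (0,14), (0,29), (0,30), (0,37), (0,34), (0,38), (0,32), (0,23), (0,25), (0,31), (0,33)]"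

definition tab2 :: "(int \<times> nat) list" where
  "tab2 = [(0,3), (0,3), (0,9), (3,3), (0,10), (0,9), (0,10), (0,10), (2,3), (3,9), (3,10), (0,9), (2,3), (0,10), (0,9), (0,10), (1,10), (2,9), (2,10), (0,3), (0,10), (2,9), (2,10), (0,10), (1,10), (0,3), (0,10), (0,9), (1,9), (0,3), (0,9), (0,9), (1,9), (0,3), (0,9), (0,3), (1,3), (0,3), (1,3)]"

definition tab3 :: "(int \<times> nat) list" where
  "tab3 = [(0,4), (0,11), (0,4), (0,12), (1,4), (0,19), (0,20), (0,11), (0,12), (0,21), (0,22), (1,11), (1,12), (0,29), (0,30), (0,19), (0,20), (0,21), (0,22), (1,19), (1,20), (1,21), (1,22), (0,30), (0,4), (0,29), (0,4), (0,29), (0,30), (1,29), (1,30), (0,20), (0,11), (0,19), (0,11), (0,30), (0,29), (0,20), (0,19)]"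

definition tab :: "nat \<Rightarrow> (int \<times> nat) list" where
  "tab g = (if g = 0 then tab0 else if g = 1 then tab1 else if g = 2 then tab2 else tab3)"

definition nw :: "nat list list" where
  "nw = [[], [0], [1], [0,1], [1,0], [0,1,0], [1,0,1], [0,1,0,1], [1,0,1,0], [0,1,0,1,0], [1,0,1,0,1], [0,1,0,1,0,1]]"

definition lmt :: "nat \<Rightarrow> nat list" where
  "lmt i = (if i = 0 then [1,0,3,2,5,4,7,6,9,8,11,10] else [2,4,0,6,1,8,3,10,5,11,7,9])"

definition shp :: "(nat \<times> nat \<times> nat list \<times> nat list) list" where
  "shp = [(0::nat,0::nat,[],[]), (0::nat,0::nat,[0],[]), (0::nat,0::nat,[1],[]), (1,0,[],[]), (1,1,[],[]), (0::nat,0::nat,[0,1],[]), (1,1,[0],[]), (0::nat,0::nat,[1,0],[]), (1,0,[1],[]), (1,0,[],[1]), (1,0,[],[1,0]), (1,1,[],[0]), (1,0,[0,1],[]), (0::nat,0::nat,[0,1,0],[]), (1,1,[0],[0]), (0::nat,0::nat,[1,0,1],[]), (1,1,[1,0],[]), (1,0,[1],[1]), (1,0,[1],[1,0]), (1,1,[],[0,1]), (1,1,[],[0,1,0,1,0]), (1,0,[0,1],[1]), (1,0,[0,1],[1,0]), (0::nat,0::nat,[0,1,0,1],[]), (1,1,[0,1,0],[]), (1,1,[0],[0,1]), (1,1,[1,0,1,0],[]), (0::nat,0::nat,[1,0,1,0],[]), (1,1,[1,0],[0]), (1,1,[],[0,1,0]), (1,1,[],[0,1,0,1]), (0::nat,0::nat,[0,1,0,1,0],[]),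 (1,1,[0,1,0],[0]), (1,1,[0],[0,1,0]), (1,1,[0],[0,1,0,1]), (0::nat,0::nat,[1,0,1,0,1],[]), (1,1,[1,0],[0,1]), (0::nat,0::nat,[0,1,0,1,0,1],[]), (1,1,[0,1,0],[0,1])]"


definition sp :: "'a::ring_1 \<Rightarrow> 'a \<Rightarrow> 'a \<Rightarrow> 'a \<Rightarrow> 'a \<Rightarrow> 'a \<Rightarrow> 'a \<Rightarrow> bool" where
  "sp d d' r0 r1 e0 e1 x \<longleftrightarrow> (\<exists>c. (\<forall>j<39. c j \<in> laurent_scalars d d') \<and> x = (\<Sum>j<39. c j * w4 r0 r1 e0 e1 (nfw ! j)))"


definition acttab :: "nat \<Rightarrow> (int \<times> int) list" where
  "acttab i = (if i = 0 then [(1,0), (1,0), (1,1), (2,1), (1,1), (2,1), (2,1), (1,1), (2,1), (1,1), (1,0), (1,0)]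
     else [(0,1), (3,1), (0,1), (3,1), (3,2), (3,2), (3,2), (3,2), (3,1), (0,1), (3,1), (0,1)])"

lemma all_upt': "(\<forall>j<(n::nat). P j) \<longleftrightarrow> list_all P [0..<n]"
  by (auto simp: list_all_iff)

lemma upt12': "[0..<12] = [0,1,2,3,4,5,6,7,8,9,10,11]" by (simp add: upt_rec)

lemma all12: "(\<forall>k<(12::nat). P k) \<longleftrightarrow> P 0 \<and> P 1 \<and> P 2 \<and> P 3 \<and> P 4 \<and> P 5 \<and> P 6 \<and> P 7 \<and> P 8 \<and> P 9 \<and> P 10 \<and> P 11"
  unfolding all_upt' upt12' by simp

lemma g2_word_Nil: "g2_word [] = id" by (simp add: g2_word_def)
lemma g2_word_Cons: "g2_word (i # ws) = g2_refl i \<circ> g2_word ws" by (simp add: g2_word_def)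
lemma g2_word_append: "g2_word (a @ b) = g2_word a \<circ> g2_word b"
  by (induct a) (simp_all add: g2_word_Nil g2_word_Cons comp_assoc)

lemma refl_invol: "g2_refl i \<circ> g2_refl i = id"
  by (auto simp: g2_refl_def fun_eq_iff)

lemma g2_rev: "g2_word (rev a) \<circ> g2_word a = id"
proof (induct a)
  case Nil then show ?case by (simp add: g2_word_Nil)
next
  case (Cons i a)
  have "g2_word (rev (i # a)) \<circ> g2_word (i # a) = g2_word (rev a) \<circ> (g2_refl i \<circ> g2_refl i) \<circ> g2_word a"
    by (simp add: g2_word_append g2_word_Cons g2_word_Nil comp_assoc)
  also have "... = g2_word (rev a) \<circ> g2_word a" by (simp add: refl_invol)
  also have "... = id" by (rule Cons)
  finally show ?case .
qed

lemma g2_rev2: "g2_word a \<circ> g2_word (rev a) = id"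
  using g2_rev[of "rev a"] by simp

lemma g2_rev_cong: "g2_word a = g2_word b \<Longrightarrow> g2_word (rev a) = g2_word (rev b)"
proof -
  assume h: "g2_word a = g2_word b"
  have "g2_word (rev a) = g2_word (rev a) \<circ> (g2_word b \<circ> g2_word (rev b))" by (simp add: g2_rev2)
  also have "... = (g2_word (rev a) \<circ> g2_word a) \<circ> g2_word (rev b)" by (simp add: h comp_assoc)
  also have "... = g2_word (rev b)" by (simp add: g2_rev)
  finally show ?thesis .
qed

lemma lmt_lt: "k < 12 \<Longrightarrow> lmt i ! k < 12"
proof -
  have "\<forall>k<12. lmt i ! k < 12" unfolding all12 by (simp add: lmt_def)
  then show "k < 12 \<Longrightarrow> lmt i ! k < 12" by blast
qed

lemma refl_ne0: "i \<noteq> 0 \<Longrightarrow> g2_refl i = g2_refl 1" by (simp add: g2_refl_def)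

lemma g2_lin: "g2_word ws (a, b) = (a * fst (g2_word ws (1,0)) + b * fst (g2_word ws (0,1)),
   a * snd (g2_word ws (1,0)) + b * snd (g2_word ws (0,1)))"
proof (induct ws)
  case Nil then show ?case by (simp add: g2_word_Nil)
next
  case (Cons i ws)
  show ?case
    apply (simp only: g2_word_Cons comp_apply Cons)
    apply (simp add: g2_refl_def split_def algebra_simps)
    done
qed

lemma g2_eq_basis: assumes "g2_word u (1,0) = g2_word v (1,0)" "g2_word u (0,1) = g2_word v (0,1)"
  shows "g2_word u = g2_word v"
proof (rule ext)
  fix x :: "int \<times> int"
  obtain a b where x: "x = (a, b)" by (cases x)
  have "g2_word u (a,b) = (a * fst (g2_word u (1,0)) + b * fst (g2_word u (0,1)),
   a * snd (g2_word u (1,0)) + b * snd (g2_word u (0,1)))" by (rule g2_lin)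
  also have "... = (a * fst (g2_word v (1,0)) + b * fst (g2_word v (0,1)),
   a * snd (g2_word v (1,0)) + b * snd (g2_word v (0,1)))" by (simp only: assms)
  also have "... = g2_word v (a,b)" by (rule g2_lin[symmetric])
  finally show "g2_word u x = g2_word v x" by (simp only: x)
qed

lemma lmt_g2': "k < 12 \<Longrightarrow> g2_word (nw ! (lmt i ! k)) = g2_word (i # nw ! k)"
proof -
  have a: "\<forall>k<12. g2_word (nw ! (lmt 0 ! k)) (1,0) = g2_word (0 # nw ! k) (1,0) \<and> g2_word (nw ! (lmt 0 ! k)) (0,1) = g2_word (0 # nw ! k) (0,1)"
    unfolding all12 by (simp add: lmt_def nw_def g2_word_def g2_refl_def)
  have b: "\<forall>k<12. g2_word (nw ! (lmt 1 ! k)) (1,0) = g2_word (1 # nw ! k) (1,0) \<and> g2_word (nw ! (lmt 1 ! k)) (0,1) = g2_word (1 # nw ! k) (0,1)"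
    unfolding all12 by (simp add: lmt_def nw_def g2_word_def g2_refl_def)
  assume k: "k < 12"
  show ?thesis
  proof (cases "i = 0")
    case True with a k show ?thesis by (auto intro: g2_eq_basis)
  next
    case False
    then have "lmt i = lmt 1" "g2_word (i # nw ! k) = g2_word (1 # nw ! k)"
      by (simp add: lmt_def False, simp only: g2_word_Cons refl_ne0[OF False])
    with False b k show ?thesis by (auto intro: g2_eq_basis)
  qed
qed

lemma lmt_g2: "k < 12 \<Longrightarrow> g2_word (nw ! (lmt i ! k)) = g2_refl i \<circ> g2_word (nw ! k)"
  using lmt_g2'[of k i] by (simp add: g2_word_Cons)

fun wnf :: "nat list \<Rightarrow> nat" where
  "wnf [] = 0"
| "wnf (i # ws) = lmt i ! wnf ws"

lemma wnf_lt: "wnf ws < 12"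
  by (induct ws) (simp_all add: lmt_lt)

lemma wnf_g2: "g2_word ws = g2_word (nw ! wnf ws)"
proof (induct ws)
  case Nil then show ?case by (simp add: nw_def)
next
  case (Cons i ws)
  then show ?case by (simp add: g2_word_Cons lmt_g2 wnf_lt)
qed

lemma nw_inj: "k < 12 \<Longrightarrow> k' < 12 \<Longrightarrow> g2_word (nw ! k) = g2_word (nw ! k') \<Longrightarrow> k = k'"
proof -
  have "\<forall>k<12. \<forall>k'<12. (g2_word (nw ! k) (1,0), g2_word (nw ! k) (0,1)) = (g2_word (nw ! k') (1,0), g2_word (nw ! k') (0,1)) \<longrightarrow> k = k'"
    unfolding all12 by (simp add: nw_def g2_word_def g2_refl_def)
  moreover assume "k < 12" "k' < 12" "g2_word (nw ! k) = g2_word (nw ! k')"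
  ultimately show "k = k'" by simp
qed

lemma g2_act_char:
  assumes "\<gamma> \<in> G2_pos" "\<gamma> = w \<beta> \<or> \<gamma> = (- fst (w \<beta>), - snd (w \<beta>))"
  shows "g2_act w \<beta> = \<gamma>"
  unfolding g2_act_def
proof (rule the_equality)
  show "\<gamma> \<in> G2_pos \<and> (\<gamma> = w \<beta> \<or> \<gamma> = (- fst (w \<beta>), - snd (w \<beta>)))" using assms by blast
next
  fix g assume g: "g \<in> G2_pos \<and> (g = w \<beta> \<or> g = (- fst (w \<beta>), - snd (w \<beta>)))"
  have P: "x \<in> G2_pos \<Longrightarrow> fst x \<ge> 0 \<and> snd x \<ge> 0 \<and> (fst x > 0 \<or> snd x > 0)" for x
    by (auto simp: G2_pos_def)
  obtain a b where wb: "w \<beta> = (a, b)" by (cases "w \<beta>")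
  show "g = \<gamma>" using g assms P[of g] P[of \<gamma>] unfolding wb by (auto simp: prod_eq_iff)
qed

lemma act_tab: "k < 12 \<Longrightarrow> i \<in> {0,1} \<Longrightarrow> g2_act (g2_word (nw ! k)) (g2_simple i) = acttab i ! k"
proof -
  have a: "\<forall>k<12. acttab 0 ! k \<in> G2_pos \<and> (acttab 0 ! k = g2_word (nw ! k) (g2_simple 0) \<or>
      acttab 0 ! k = (- fst (g2_word (nw ! k) (g2_simple 0)), - snd (g2_word (nw ! k) (g2_simple 0))))"
    unfolding all12 by (simp add: acttab_def G2_pos_def nw_def g2_word_def g2_refl_def g2_simple_def)
  have b: "\<forall>k<12. acttab 1 ! k \<in> G2_pos \<and> (acttab 1 ! k = g2_word (nw ! k) (g2_simple 1) \<or>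
      acttab 1 ! k = (- fst (g2_word (nw ! k) (g2_simple 1)), - snd (g2_word (nw ! k) (g2_simple 1))))"
    unfolding all12 by (simp add: acttab_def G2_pos_def nw_def g2_word_def g2_refl_def g2_simple_def)
  assume "k < 12" "i \<in> {0,1}"
  then show ?thesis using a b by (auto intro: g2_act_char)
qed

lemma stab0: "k < 12 \<Longrightarrow> acttab 0 ! k = g2_simple 0 \<Longrightarrow> k = 0 \<or> k = 1 \<or> k = 10 \<or> k = 11"
proof -
  have "\<forall>k<12. acttab 0 ! k = g2_simple 0 \<longrightarrow> k = 0 \<or> k = 1 \<or> k = 10 \<or> k = 11"
    unfolding all12 by (simp add: acttab_def g2_simple_def)
  then show "k < 12 \<Longrightarrow> acttab 0 ! k = g2_simple 0 \<Longrightarrow> k = 0 \<or> k = 1 \<or> k = 10 \<or> k = 11" by blast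
qed

lemma stab1: "k < 12 \<Longrightarrow> acttab 1 ! k = g2_simple 1 \<Longrightarrow> k = 0 \<or> k = 2 \<or> k = 9 \<or> k = 11"
proof -
  have "\<forall>k<12. acttab 1 ! k = g2_simple 1 \<longrightarrow> k = 0 \<or> k = 2 \<or> k = 9 \<or> k = 11"
    unfolding all12 by (simp add: acttab_def g2_simple_def)
  then show "k < 12 \<Longrightarrow> acttab 1 ! k = g2_simple 1 \<Longrightarrow> k = 0 \<or> k = 2 \<or> k = 9 \<or> k = 11" by blast
qed

lemma K_nil: "i \<in> {0,1} \<Longrightarrow> g2_word [] \<in> G2_K i"
  by (auto simp: G2_K_def g2_word_Nil intro: exI[of _ 0])

lemma K_five: "g2_word [0,1,0,1,0] \<in> G2_K 1"
  unfolding G2_K_def by (auto intro!: exI[of _ 1])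


context
  fixes d d' r0 r1 e0 e1 :: "'a::ring_1"
  assumes rels: "br_G2_rels d d' r0 r1 e0 e1"
begin

lemma dd': "d * d' = 1" and d'd: "d' * d = 1" and dcent: "d * x = x * d"
  using rels unfolding br_G2_rels_def by auto

lemma d'cent: "d' * x = x * d'"
proof -
  have "d' * x = d' * x * (d * d')" by (simp add: dd')
  also have "... = d' * (x * d) * d'" by (simp add: mult.assoc)
  also have "... = d' * (d * x) * d'" by (simp only: dcent[of x])
  also have "... = x * d'" by (simp add: mult.assoc[symmetric] d'd)
  finally show ?thesis .
qed

lemma dpow_cent: "dpow d d' k * x = x * dpow d d' k"
proof -
  have a: "d ^ n * x = x * d ^ n" for n
  proof (induct n)
    case (Suc n)
    have "d ^ Suc n * x = d * (d ^ n * x)" by (simp add: mult.assoc)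
    also have "... = (d * x) * d ^ n" by (simp only: Suc mult.assoc)
    also have "... = x * d ^ Suc n" by (simp only: dcent[of x] mult.assoc power_Suc)
    finally show ?case .
  qed simp
  have b: "d' ^ n * x = x * d' ^ n" for n
  proof (induct n)
    case (Suc n)
    have "d' ^ Suc n * x = d' * (d' ^ n * x)" by (simp add: mult.assoc)
    also have "... = (d' * x) * d' ^ n" by (simp only: Suc mult.assoc)
    also have "... = x * d' ^ Suc n" by (simp only: d'cent[of x] mult.assoc power_Suc)
    finally show ?case .
  qed simp
  show ?thesis using a b by (simp add: dpow_def)
qed

lemma dpow_succ: "dpow d d' (k + 1) = d * dpow d d' k"
proof (cases "k \<ge> 0")
  case True
  then have "nat (k+1) = Suc (nat k)" by simp
  with True show ?thesis by (simp add: dpow_def)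
next
  case False
  show ?thesis
  proof (cases "k = -1")
    case True then show ?thesis by (simp add: dpow_def dd')
  next
    case F2: False
    with False have "nat (-k) = Suc (nat (- (k+1)))" by simp
    with False F2 show ?thesis by (simp add: dpow_def mult.assoc[symmetric] dd')
  qed
qed

lemma dpow_pred: "dpow d d' (k - 1) = d' * dpow d d' k"
proof -
  have "dpow d d' k = d * dpow d d' (k - 1)" using dpow_succ[of "k-1"] by simp
  then have "d' * dpow d d' k = (d' * d) * dpow d d' (k - 1)" by (simp add: mult.assoc)
  then show ?thesis by (simp add: d'd)
qed

lemma dpow_add: "dpow d d' a * dpow d d' b = dpow d d' (a + b)"
proof (induct b rule: int_induct[where k=0])
  case base then show ?case by (simp add: dpow_zero)
next
  case (step1 i)
  have "dpow d d' a * dpow d d' (i + 1) = d * (dpow d d' a * dpow d d' i)"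
    by (simp only: dpow_succ mult.assoc[symmetric] dpow_cent[where x=d])
  also have "... = dpow d d' (a + (i + 1))" using step1 by (simp add: dpow_succ[of "a+i", symmetric] add.assoc)
  finally show ?case .
next
  case (step2 i)
  have "dpow d d' a * dpow d d' (i - 1) = d' * (dpow d d' a * dpow d d' i)"
    by (simp only: dpow_pred mult.assoc[symmetric] dpow_cent[where x=d'])
  also have "... = dpow d d' (a + (i - 1))" using step2 by (simp add: dpow_pred[of "a+i", symmetric] add_diff_eq)
  finally show ?case .
qed

lemma dpow_assoc: "dpow d d' a * (dpow d d' b * y) = dpow d d' (a + b) * y"
  by (simp add: mult.assoc[symmetric] dpow_add)

lemma dcomm: "r0 * (dpow d d' k * y) = dpow d d' k * (r0 * y)"
  "r1 * (dpow d d' k * y) = dpow d d' k * (r1 * y)"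
  "e0 * (dpow d d' k * y) = dpow d d' k * (e0 * y)"
  "e1 * (dpow d d' k * y) = dpow d d' k * (e1 * y)"
  "r0 * dpow d d' k = dpow d d' k * r0"
  "r1 * dpow d d' k = dpow d d' k * r1"
  "e0 * dpow d d' k = dpow d d' k * e0"
  "e1 * dpow d d' k = dpow d d' k * e1"
  by (simp_all only: mult.assoc[symmetric] dpow_cent[where x=r0] dpow_cent[where x=r1] dpow_cent[where x=e0] dpow_cent[where x=e1])

lemma dpow_cancel: "dpow d d' a * x = dpow d d' b * y \<Longrightarrow> x = dpow d d' (b - a) * y"
proof -
  assume h: "dpow d d' a * x = dpow d d' b * y"
  have "x = dpow d d' (-a) * (dpow d d' a * x)" by (simp add: dpow_assoc dpow_zero)
  also have "... = dpow d d' (b - a) * y" by (simp add: h dpow_assoc)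
  finally show ?thesis .
qed


lemma kb0_t: "r0 * (r0 * y) = y"
  using rels unfolding br_G2_rels_def by (simp add: mult.assoc[symmetric] dpow_def)
lemmas kb0 = kb0_t[of 1, simplified]

lemma kb1_t: "r1 * (r1 * y) = y"
  using rels unfolding br_G2_rels_def by (simp add: mult.assoc[symmetric] dpow_def)
lemmas kb1 = kb1_t[of 1, simplified]

lemma kb2_t: "r0 * (e0 * y) = e0 * y"
  using rels unfolding br_G2_rels_def by (simp add: mult.assoc[symmetric] dpow_def)
lemmas kb2 = kb2_t[of 1, simplified]

lemma kb3_t: "e0 * (r0 * y) = e0 * y"
  using rels unfolding br_G2_rels_def by (simp add: mult.assoc[symmetric] dpow_def)
lemmas kb3 = kb3_t[of 1, simplified]

lemma kb4_t: "r1 * (e1 * y) = e1 * y"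
  using rels unfolding br_G2_rels_def by (simp add: mult.assoc[symmetric] dpow_def)
lemmas kb4 = kb4_t[of 1, simplified]

lemma kb5_t: "e1 * (r1 * y) = e1 * y"
  using rels unfolding br_G2_rels_def by (simp add: mult.assoc[symmetric] dpow_def)
lemmas kb5 = kb5_t[of 1, simplified]

lemma kb6_t: "e0 * (e0 * y) = dpow d d' 3 * (e0 * y)"
  using rels unfolding br_G2_rels_def by (simp add: mult.assoc[symmetric] dpow_def)
lemmas kb6 = kb6_t[of 1, simplified]

lemma kb7_t: "e1 * (e1 * y) = dpow d d' 1 * (e1 * y)"
  using rels unfolding br_G2_rels_def by (simp add: mult.assoc[symmetric] dpow_def)
lemmas kb7 = kb7_t[of 1, simplified]

lemma kb8_t: "r0 * (e1 * (e0 * y)) = r1 * (e0 * y)"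
  using rels unfolding br_G2_rels_def by (simp add: mult.assoc[symmetric] dpow_def)
lemmas kb8 = kb8_t[of 1, simplified]

lemma kb9_t: "e0 * (e1 * (r0 * y)) = e0 * (r1 * y)"
  using rels unfolding br_G2_rels_def by (simp add: mult.assoc[symmetric] dpow_def)
lemmas kb9 = kb9_t[of 1, simplified]

lemma kb10_t: "e1 * (r0 * (e1 * (r0 * (e1 * y)))) = e1 * y"
  using rels unfolding br_G2_rels_def by (simp add: mult.assoc[symmetric] dpow_def)
lemmas kb10 = kb10_t[of 1, simplified]

lemma kb11_t: "e1 * (r0 * (e1 * (r0 * (r1 * y)))) = e1 * (r0 * (r1 * (r0 * y)))"
  using rels unfolding br_G2_rels_def by (simp add: mult.assoc[symmetric] dpow_def)
lemmas kb11 = kb11_t[of 1, simplified]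

lemma kb12_t: "e0 * (r1 * (e0 * y)) = dpow d d' 2 * (e0 * y)"
  using rels unfolding br_G2_rels_def by (simp add: mult.assoc[symmetric] dpow_def)
lemmas kb12 = kb12_t[of 1, simplified]

lemma kb13_t: "r1 * (r0 * (e1 * (r0 * (e1 * y)))) = r0 * (r1 * (r0 * (e1 * y)))"
  using rels unfolding br_G2_rels_def by (simp add: mult.assoc[symmetric] dpow_def)
lemmas kb13 = kb13_t[of 1, simplified]

lemma kb14_t: "r1 * (r0 * (r1 * (r0 * (r1 * (r0 * (r1 * (r0 * (r1 * (r0 * (r1 * (r0 * y))))))))))) = y"
proof -
  have R: "(r1*r0)^6 = 1" using rels unfolding br_G2_rels_def by simp
  have "r1 * (r0 * (r1 * (r0 * (r1 * (r0 * (r1 * (r0 * (r1 * (r0 * (r1 * (r0 * y))))))))))) = (r1*r0)^6 * y" by (simp add: eval_nat_numeral mult.assoc)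
  then show ?thesis using R by simp
qed
lemmas kb14 = kb14_t[of 1, simplified]

lemma kb15_t: "r0 * (r1 * (e0 * y)) = e1 * (e0 * y)"
proof -
  have A: "dpow d d' 0 * (r0 * (r0 * (e1 * (e0 * y)))) = dpow d d' 0 * (e1 * (e0 * y))"
    by (simp add: kb0_t[of "e1 * (e0 * y)"] dcomm dpow_assoc)
  have B: "dpow d d' 0 * (r0 * (r0 * (e1 * (e0 * y)))) = dpow d d' 0 * (r0 * (r1 * (e0 * y)))"
    by (simp add: kb8_t[of "y"] dcomm dpow_assoc)
  have "dpow d d' 0 * (r0 * (r1 * (e0 * y))) = dpow d d' 0 * (e1 * (e0 * y))" using B[symmetric] A by (rule trans)
  then have "r0 * (r1 * (e0 * y)) = dpow d d' (0 - 0) * (e1 * (e0 * y))" by (rule dpow_cancel)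
  then show ?thesis by (simp add: dpow_zero)
qed
lemmas kb15 = kb15_t[of 1, simplified]

lemma kb16_t: "r1 * (r0 * (r1 * (r0 * (e1 * y)))) = r0 * (e1 * (r0 * (e1 * y)))"
proof -
  have A: "dpow d d' 0 * (r1 * (r1 * (r0 * (e1 * (r0 * (e1 * y)))))) = dpow d d' 0 * (r0 * (e1 * (r0 * (e1 * y))))"
    by (simp add: kb1_t[of "r0 * (e1 * (r0 * (e1 * y)))"] dcomm dpow_assoc)
  have B: "dpow d d' 0 * (r1 * (r1 * (r0 * (e1 * (r0 * (e1 * y)))))) = dpow d d' 0 * (r1 * (r0 * (r1 * (r0 * (e1 * y)))))"
    by (simp add: kb13_t[of "y"] dcomm dpow_assoc)
  have "dpow d d' 0 * (r1 * (r0 * (r1 * (r0 * (e1 * y))))) = dpow d d' 0 * (r0 * (e1 * (r0 * (e1 * y))))" using B[symmetric] A by (rule trans)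
  then have "r1 * (r0 * (r1 * (r0 * (e1 * y)))) = dpow d d' (0 - 0) * (r0 * (e1 * (r0 * (e1 * y))))" by (rule dpow_cancel)
  then show ?thesis by (simp add: dpow_zero)
qed
lemmas kb16 = kb16_t[of 1, simplified]

lemma kb17_t: "r0 * (r1 * (r0 * (r1 * (r0 * (r1 * (r0 * (r1 * (r0 * (r1 * (r0 * y)))))))))) = r1 * y"
proof -
  have A: "dpow d d' 0 * (r1 * (r1 * (r0 * (r1 * (r0 * (r1 * (r0 * (r1 * (r0 * (r1 * (r0 * (r1 * (r0 * y))))))))))))) = dpow d d' 0 * (r0 * (r1 * (r0 * (r1 * (r0 * (r1 * (r0 * (r1 * (r0 * (r1 * (r0 * y)))))))))))"
    by (simp add: kb1_t[of "r0 * (r1 * (r0 * (r1 * (r0 * (r1 * (r0 * (r1 * (r0 * (r1 * (r0 * y))))))))))"] dcomm dpow_assoc)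
  have B: "dpow d d' 0 * (r1 * (r1 * (r0 * (r1 * (r0 * (r1 * (r0 * (r1 * (r0 * (r1 * (r0 * (r1 * (r0 * y))))))))))))) = dpow d d' 0 * (r1 * y)"
    by (simp add: kb14_t[of "y"] dcomm dpow_assoc)
  have "dpow d d' 0 * (r0 * (r1 * (r0 * (r1 * (r0 * (r1 * (r0 * (r1 * (r0 * (r1 * (r0 * y))))))))))) = dpow d d' 0 * (r1 * y)" using A[symmetric] B by (rule trans)
  then have "r0 * (r1 * (r0 * (r1 * (r0 * (r1 * (r0 * (r1 * (r0 * (r1 * (r0 * y)))))))))) = dpow d d' (0 - 0) * (r1 * y)" by (rule dpow_cancel)
  then show ?thesis by (simp add: dpow_zero)
qed
lemmas kb17 = kb17_t[of 1, simplified]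

lemma kb18_t: "e0 * (e1 * (e0 * y)) = dpow d d' 2 * (e0 * y)"
proof -
  have A: "dpow d d' 0 * (e0 * (r0 * (e1 * (e0 * y)))) = dpow d d' 0 * (e0 * (e1 * (e0 * y)))"
    by (simp add: kb3_t[of "e1 * (e0 * y)"] dcomm dpow_assoc)
  have "dpow d d' 0 * (e0 * (r0 * (e1 * (e0 * y)))) = dpow d d' 0 * (e0 * (r1 * (e0 * y)))"
    by (simp add: kb8_t[of "y"] dcomm dpow_assoc)
  also have "... = dpow d d' 2 * (e0 * y)"
    by (simp add: kb12_t[of "y"] dcomm dpow_assoc)
  finally have B: "dpow d d' 0 * (e0 * (r0 * (e1 * (e0 * y)))) = dpow d d' 2 * (e0 * y)" .
  have "dpow d d' 0 * (e0 * (e1 * (e0 * y))) = dpow d d' 2 * (e0 * y)" using A[symmetric] B by (rule trans)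
  then have "e0 * (e1 * (e0 * y)) = dpow d d' (2 - 0) * (e0 * y)" by (rule dpow_cancel)
  then show ?thesis by (simp add: dpow_zero)
qed
lemmas kb18 = kb18_t[of 1, simplified]

lemma kb19_t: "e1 * (r0 * (r1 * (r0 * (e1 * y)))) = e1 * y"
proof -
  have "dpow d d' 0 * (e1 * (r1 * (r0 * (e1 * (r0 * (e1 * y)))))) = dpow d d' 0 * (e1 * (r0 * (e1 * (r0 * (e1 * y)))))"
    by (simp add: kb5_t[of "r0 * (e1 * (r0 * (e1 * y)))"] dcomm dpow_assoc)
  also have "... = dpow d d' 0 * (e1 * y)"
    by (simp add: kb10_t[of "y"] dcomm dpow_assoc)
  finally have A: "dpow d d' 0 * (e1 * (r1 * (r0 * (e1 * (r0 * (e1 * y)))))) = dpow d d' 0 * (e1 * y)" .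
  have B: "dpow d d' 0 * (e1 * (r1 * (r0 * (e1 * (r0 * (e1 * y)))))) = dpow d d' 0 * (e1 * (r0 * (r1 * (r0 * (e1 * y)))))"
    by (simp add: kb13_t[of "y"] dcomm dpow_assoc)
  have "dpow d d' 0 * (e1 * (r0 * (r1 * (r0 * (e1 * y))))) = dpow d d' 0 * (e1 * y)" using B[symmetric] A by (rule trans)
  then have "e1 * (r0 * (r1 * (r0 * (e1 * y)))) = dpow d d' (0 - 0) * (e1 * y)" by (rule dpow_cancel)
  then show ?thesis by (simp add: dpow_zero)
qed
lemmas kb19 = kb19_t[of 1, simplified]

lemma kb20_t: "e0 * (r1 * (r0 * y)) = e0 * (e1 * y)"
proof -
  have A: "dpow d d' 0 * (e0 * (e1 * (r0 * (r0 * y)))) = dpow d d' 0 * (e0 * (r1 * (r0 * y)))"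
    by (simp add: kb9_t[of "r0 * y"] dcomm dpow_assoc)
  have B: "dpow d d' 0 * (e0 * (e1 * (r0 * (r0 * y)))) = dpow d d' 0 * (e0 * (e1 * y))"
    by (simp add: kb0_t[of "y"] dcomm dpow_assoc)
  have "dpow d d' 0 * (e0 * (r1 * (r0 * y))) = dpow d d' 0 * (e0 * (e1 * y))" using A[symmetric] B by (rule trans)
  then have "e0 * (r1 * (r0 * y)) = dpow d d' (0 - 0) * (e0 * (e1 * y))" by (rule dpow_cancel)
  then show ?thesis by (simp add: dpow_zero)
qed
lemmas kb20 = kb20_t[of 1, simplified]

lemma kb21_t: "e1 * (r0 * (r1 * (r0 * (r1 * y)))) = e1 * (r0 * (e1 * (r0 * y)))"
proof -
  have A: "dpow d d' 0 * (e1 * (r0 * (e1 * (r0 * (r1 * (r1 * y)))))) = dpow d d' 0 * (e1 * (r0 * (r1 * (r0 * (r1 * y)))))"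
    by (simp add: kb11_t[of "r1 * y"] dcomm dpow_assoc)
  have B: "dpow d d' 0 * (e1 * (r0 * (e1 * (r0 * (r1 * (r1 * y)))))) = dpow d d' 0 * (e1 * (r0 * (e1 * (r0 * y))))"
    by (simp add: kb1_t[of "y"] dcomm dpow_assoc)
  have "dpow d d' 0 * (e1 * (r0 * (r1 * (r0 * (r1 * y))))) = dpow d d' 0 * (e1 * (r0 * (e1 * (r0 * y))))" using A[symmetric] B by (rule trans)
  then have "e1 * (r0 * (r1 * (r0 * (r1 * y)))) = dpow d d' (0 - 0) * (e1 * (r0 * (e1 * (r0 * y))))" by (rule dpow_cancel)
  then show ?thesis by (simp add: dpow_zero)
qed
lemmas kb21 = kb21_t[of 1, simplified]

lemma kb22_t: "r0 * (r1 * (r0 * (e1 * (r0 * (r1 * (r0 * y)))))) = r1 * (r0 * (e1 * (r0 * (r1 * y))))"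
proof -
  have "dpow d d' 0 * (r1 * (r0 * (e1 * (r0 * (e1 * (r0 * (e1 * (r0 * (r1 * y))))))))) = dpow d d' 0 * (r0 * (r1 * (r0 * (e1 * (r0 * (e1 * (r0 * (r1 * y))))))))"
    by (simp add: kb13_t[of "r0 * (e1 * (r0 * (r1 * y)))"] dcomm dpow_assoc)
  also have "... = dpow d d' 0 * (r0 * (r1 * (r0 * (e1 * (r0 * (r1 * (r0 * y)))))))"
    by (simp add: kb11_t[of "y"] dcomm dpow_assoc)
  finally have A: "dpow d d' 0 * (r1 * (r0 * (e1 * (r0 * (e1 * (r0 * (e1 * (r0 * (r1 * y))))))))) = dpow d d' 0 * (r0 * (r1 * (r0 * (e1 * (r0 * (r1 * (r0 * y)))))))" .
  have "dpow d d' 0 * (r1 * (r0 * (e1 * (r0 * (e1 * (r0 * (e1 * (r0 * (r1 * y))))))))) = dpow d d' 0 * (r1 * (r0 * (e1 * (r0 * (e1 * (r0 * (r1 * (r0 * y))))))))"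
    by (simp add: kb11_t[of "y"] dcomm dpow_assoc)
  also have "... = dpow d d' 0 * (r1 * (r0 * (e1 * (r0 * (r1 * (r0 * (r0 * y)))))))"
    by (simp add: kb11_t[of "r0 * y"] dcomm dpow_assoc)
  also have "... = dpow d d' 0 * (r1 * (r0 * (e1 * (r0 * (r1 * y)))))"
    by (simp add: kb0_t[of "y"] dcomm dpow_assoc)
  finally have B: "dpow d d' 0 * (r1 * (r0 * (e1 * (r0 * (e1 * (r0 * (e1 * (r0 * (r1 * y))))))))) = dpow d d' 0 * (r1 * (r0 * (e1 * (r0 * (r1 * y)))))" .
  have "dpow d d' 0 * (r0 * (r1 * (r0 * (e1 * (r0 * (r1 * (r0 * y))))))) = dpow d d' 0 * (r1 * (r0 * (e1 * (r0 * (r1 * y)))))" using A[symmetric] B by (rule trans)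
  then have "r0 * (r1 * (r0 * (e1 * (r0 * (r1 * (r0 * y)))))) = dpow d d' (0 - 0) * (r1 * (r0 * (e1 * (r0 * (r1 * y)))))" by (rule dpow_cancel)
  then show ?thesis by (simp add: dpow_zero)
qed
lemmas kb22 = kb22_t[of 1, simplified]

lemma kb23_t: "r1 * (r0 * (e1 * (r0 * (r1 * (r0 * y))))) = r0 * (r1 * (r0 * (e1 * (r0 * (r1 * y)))))"
proof -
  have A: "dpow d d' 0 * (r1 * (r0 * (e1 * (r0 * (e1 * (r0 * (r1 * y))))))) = dpow d d' 0 * (r0 * (r1 * (r0 * (e1 * (r0 * (r1 * y))))))"
    by (simp add: kb13_t[of "r0 * (r1 * y)"] dcomm dpow_assoc)
  have B: "dpow d d' 0 * (r1 * (r0 * (e1 * (r0 * (e1 * (r0 * (r1 * y))))))) = dpow d d' 0 * (r1 * (r0 * (e1 * (r0 * (r1 * (r0 * y))))))"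
    by (simp add: kb11_t[of "y"] dcomm dpow_assoc)
  have "dpow d d' 0 * (r1 * (r0 * (e1 * (r0 * (r1 * (r0 * y)))))) = dpow d d' 0 * (r0 * (r1 * (r0 * (e1 * (r0 * (r1 * y))))))" using B[symmetric] A by (rule trans)
  then have "r1 * (r0 * (e1 * (r0 * (r1 * (r0 * y))))) = dpow d d' (0 - 0) * (r0 * (r1 * (r0 * (e1 * (r0 * (r1 * y))))))" by (rule dpow_cancel)
  then show ?thesis by (simp add: dpow_zero)
qed
lemmas kb23 = kb23_t[of 1, simplified]

lemma kb24_t: "r1 * (r0 * (r1 * (r0 * (r1 * (r0 * (r1 * (r0 * (r1 * (r0 * y))))))))) = r0 * (r1 * y)"
proof -
  have A: "dpow d d' 0 * (r0 * (r0 * (r1 * (r0 * (r1 * (r0 * (r1 * (r0 * (r1 * (r0 * (r1 * (r0 * y)))))))))))) = dpow d d' 0 * (r1 * (r0 * (r1 * (r0 * (r1 * (r0 * (r1 * (r0 * (r1 * (r0 * y))))))))))"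
    by (simp add: kb0_t[of "r1 * (r0 * (r1 * (r0 * (r1 * (r0 * (r1 * (r0 * (r1 * (r0 * y)))))))))"] dcomm dpow_assoc)
  have B: "dpow d d' 0 * (r0 * (r0 * (r1 * (r0 * (r1 * (r0 * (r1 * (r0 * (r1 * (r0 * (r1 * (r0 * y)))))))))))) = dpow d d' 0 * (r0 * (r1 * y))"
    by (simp add: kb17_t[of "y"] dcomm dpow_assoc)
  have "dpow d d' 0 * (r1 * (r0 * (r1 * (r0 * (r1 * (r0 * (r1 * (r0 * (r1 * (r0 * y)))))))))) = dpow d d' 0 * (r0 * (r1 * y))" using A[symmetric] B by (rule trans)
  then have "r1 * (r0 * (r1 * (r0 * (r1 * (r0 * (r1 * (r0 * (r1 * (r0 * y))))))))) = dpow d d' (0 - 0) * (r0 * (r1 * y))" by (rule dpow_cancel)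
  then show ?thesis by (simp add: dpow_zero)
qed
lemmas kb24 = kb24_t[of 1, simplified]

lemma kb25_t: "r0 * (r1 * (r0 * (r1 * (r0 * (r1 * (r0 * (r1 * (r0 * y)))))))) = r1 * (r0 * (r1 * y))"
proof -
  have A: "dpow d d' 0 * (r1 * (r1 * (r0 * (r1 * (r0 * (r1 * (r0 * (r1 * (r0 * (r1 * (r0 * y))))))))))) = dpow d d' 0 * (r0 * (r1 * (r0 * (r1 * (r0 * (r1 * (r0 * (r1 * (r0 * y)))))))))"
    by (simp add: kb1_t[of "r0 * (r1 * (r0 * (r1 * (r0 * (r1 * (r0 * (r1 * (r0 * y))))))))"] dcomm dpow_assoc)
  have B: "dpow d d' 0 * (r1 * (r1 * (r0 * (r1 * (r0 * (r1 * (r0 * (r1 * (r0 * (r1 * (r0 * y))))))))))) = dpow d d' 0 * (r1 * (r0 * (r1 * y)))"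
    by (simp add: kb24_t[of "y"] dcomm dpow_assoc)
  have "dpow d d' 0 * (r0 * (r1 * (r0 * (r1 * (r0 * (r1 * (r0 * (r1 * (r0 * y))))))))) = dpow d d' 0 * (r1 * (r0 * (r1 * y)))" using A[symmetric] B by (rule trans)
  then have "r0 * (r1 * (r0 * (r1 * (r0 * (r1 * (r0 * (r1 * (r0 * y)))))))) = dpow d d' (0 - 0) * (r1 * (r0 * (r1 * y)))" by (rule dpow_cancel)
  then show ?thesis by (simp add: dpow_zero)
qed
lemmas kb25 = kb25_t[of 1, simplified]

lemma kb26_t: "r1 * (r0 * (r1 * (r0 * (r1 * (r0 * (r1 * (r0 * y))))))) = r0 * (r1 * (r0 * (r1 * y)))"
proof -
  have A: "dpow d d' 0 * (r0 * (r0 * (r1 * (r0 * (r1 * (r0 * (r1 * (r0 * (r1 * (r0 * y)))))))))) = dpow d d' 0 * (r1 * (r0 * (r1 * (r0 * (r1 * (r0 * (r1 * (r0 * y))))))))"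
    by (simp add: kb0_t[of "r1 * (r0 * (r1 * (r0 * (r1 * (r0 * (r1 * (r0 * y)))))))"] dcomm dpow_assoc)
  have B: "dpow d d' 0 * (r0 * (r0 * (r1 * (r0 * (r1 * (r0 * (r1 * (r0 * (r1 * (r0 * y)))))))))) = dpow d d' 0 * (r0 * (r1 * (r0 * (r1 * y))))"
    by (simp add: kb25_t[of "y"] dcomm dpow_assoc)
  have "dpow d d' 0 * (r1 * (r0 * (r1 * (r0 * (r1 * (r0 * (r1 * (r0 * y)))))))) = dpow d d' 0 * (r0 * (r1 * (r0 * (r1 * y))))" using A[symmetric] B by (rule trans)
  then have "r1 * (r0 * (r1 * (r0 * (r1 * (r0 * (r1 * (r0 * y))))))) = dpow d d' (0 - 0) * (r0 * (r1 * (r0 * (r1 * y))))" by (rule dpow_cancel)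
  then show ?thesis by (simp add: dpow_zero)
qed
lemmas kb26 = kb26_t[of 1, simplified]

lemma kb27_t: "r0 * (r1 * (r0 * (r1 * (r0 * (r1 * (r0 * y)))))) = r1 * (r0 * (r1 * (r0 * (r1 * y))))"
proof -
  have A: "dpow d d' 0 * (r1 * (r1 * (r0 * (r1 * (r0 * (r1 * (r0 * (r1 * (r0 * y))))))))) = dpow d d' 0 * (r0 * (r1 * (r0 * (r1 * (r0 * (r1 * (r0 * y)))))))"
    by (simp add: kb1_t[of "r0 * (r1 * (r0 * (r1 * (r0 * (r1 * (r0 * y))))))"] dcomm dpow_assoc)
  have B: "dpow d d' 0 * (r1 * (r1 * (r0 * (r1 * (r0 * (r1 * (r0 * (r1 * (r0 * y))))))))) = dpow d d' 0 * (r1 * (r0 * (r1 * (r0 * (r1 * y)))))"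
    by (simp add: kb26_t[of "y"] dcomm dpow_assoc)
  have "dpow d d' 0 * (r0 * (r1 * (r0 * (r1 * (r0 * (r1 * (r0 * y))))))) = dpow d d' 0 * (r1 * (r0 * (r1 * (r0 * (r1 * y)))))" using A[symmetric] B by (rule trans)
  then have "r0 * (r1 * (r0 * (r1 * (r0 * (r1 * (r0 * y)))))) = dpow d d' (0 - 0) * (r1 * (r0 * (r1 * (r0 * (r1 * y)))))" by (rule dpow_cancel)
  then show ?thesis by (simp add: dpow_zero)
qed
lemmas kb27 = kb27_t[of 1, simplified]

lemma kb28_t: "r1 * (r0 * (r1 * (r0 * (r1 * (r0 * y))))) = r0 * (r1 * (r0 * (r1 * (r0 * (r1 * y)))))"
proof -
  have A: "dpow d d' 0 * (r0 * (r0 * (r1 * (r0 * (r1 * (r0 * (r1 * (r0 * y)))))))) = dpow d d' 0 * (r1 * (r0 * (r1 * (r0 * (r1 * (r0 * y))))))"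
    by (simp add: kb0_t[of "r1 * (r0 * (r1 * (r0 * (r1 * (r0 * y)))))"] dcomm dpow_assoc)
  have B: "dpow d d' 0 * (r0 * (r0 * (r1 * (r0 * (r1 * (r0 * (r1 * (r0 * y)))))))) = dpow d d' 0 * (r0 * (r1 * (r0 * (r1 * (r0 * (r1 * y))))))"
    by (simp add: kb27_t[of "y"] dcomm dpow_assoc)
  have "dpow d d' 0 * (r1 * (r0 * (r1 * (r0 * (r1 * (r0 * y)))))) = dpow d d' 0 * (r0 * (r1 * (r0 * (r1 * (r0 * (r1 * y))))))" using A[symmetric] B by (rule trans)
  then have "r1 * (r0 * (r1 * (r0 * (r1 * (r0 * y))))) = dpow d d' (0 - 0) * (r0 * (r1 * (r0 * (r1 * (r0 * (r1 * y))))))" by (rule dpow_cancel)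
  then show ?thesis by (simp add: dpow_zero)
qed
lemmas kb28 = kb28_t[of 1, simplified]


lemmas kbs = kb0_t kb1_t kb2_t kb3_t kb4_t kb5_t kb6_t kb7_t kb8_t kb9_t kb10_t kb11_t kb12_t kb13_t
  kb15_t kb16_t kb18_t kb19_t kb20_t kb21_t kb23_t kb28_t
  kb0 kb1 kb2 kb3 kb4 kb5 kb6 kb7 kb8 kb9 kb10 kb11 kb12 kb13
  kb15 kb16 kb18 kb19 kb20 kb21 kb23 kb28

lemma all_upt: "(\<forall>j<(n::nat). P j) \<longleftrightarrow> list_all P [0..<n]"
  by (auto simp: list_all_iff)

lemma upt39: "[0..<39] = [0,1,2,3,4,5,6,7,8,9,10,11,12,13,14,15,16,17,18,19,20,21,22,23,24,25,26,27,28,29,30,31,32,33,34,35,36,37,38]" by (simp add: upt_rec)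
lemma upt12: "[0..<12] = [0,1,2,3,4,5,6,7,8,9,10,11]" by (simp add: upt_rec)
lemma upt4: "[0..<4] = [0,1,2,3]" by (simp add: upt_rec)


lemma clos_all: "\<forall>g<4. \<forall>j<39. lt r0 r1 e0 e1 g * w4 r0 r1 e0 e1 (nfw ! j)
   = dpow d d' (fst (tab g ! j)) * w4 r0 r1 e0 e1 (nfw ! snd (tab g ! j))"
  unfolding all_upt upt39 upt4
  by (simp add: nfw_def tab_def tab0_def tab1_def tab2_def tab3_def w4_def lt_def kbs dcomm dpow_assoc dpow_zero)


lemma all39: "(\<forall>k<(39::nat). P k) \<longleftrightarrow> P 0 \<and> P 1 \<and> P 2 \<and> P 3 \<and> P 4 \<and> P 5 \<and> P 6 \<and> P 7 \<and> P 8 \<and> P 9 \<and> P 10 \<and> P 11 \<and> P 12 \<and> P 13 \<and> P 14 \<and> P 15 \<and> P 16 \<and> P 17 \<and> P 18 \<and> P 19 \<and> P 20 \<and> P 21 \<and> P 22 \<and> P 23 \<and> P 24 \<and> P 25 \<and> P 26 \<and> P 27 \<and> P 28 \<and> P 29 \<and> P 30 \<and> P 31 \<and> P 32 \<and> P 33 \<and> P 34 \<and> P 35 \<and> P 36 \<and> P 37 \<and> P 38"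
  unfolding all_upt upt39 by simp


lemma tab_lt: "\<forall>g<4. \<forall>j<39. snd (tab g ! j) < 39"
  unfolding all_upt upt39 upt4 by (simp add: tab_def tab0_def tab1_def tab2_def tab3_def)

lemma shp_all: "\<forall>j<39. (fst (shp ! j) = 0 \<longrightarrow> w4 r0 r1 e0 e1 (nfw ! j) = alg_word r0 r1 (fst (snd (snd (shp ! j)))))
   \<and> (fst (shp ! j) \<noteq> 0 \<longrightarrow> fst (snd (shp ! j)) \<in> {0,1} \<and>
        w4 r0 r1 e0 e1 (nfw ! j) = alg_word r0 r1 (fst (snd (snd (shp ! j)))) * (if fst (snd (shp ! j)) = 0 then e0 else e1)
          * alg_word r0 r1 (snd (snd (snd (shp ! j)))))"
  unfolding all39 by (simp add: shp_def nfw_def w4_def lt_def alg_word_def kbs mult.assoc dcomm dpow_assoc dpow_zero)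

lemma alg_Cons: "alg_word r0 r1 (i # ws) = (if i = 0 then r0 else r1) * alg_word r0 r1 ws"
  by (simp add: alg_word_def)

lemma alg_append: "alg_word r0 r1 (a @ b) = alg_word r0 r1 a * alg_word r0 r1 b"
  by (simp add: alg_word_def)

lemma lmt_alg: "k < 12 \<Longrightarrow> alg_word r0 r1 (nw ! (lmt i ! k)) = (if i = 0 then r0 else r1) * alg_word r0 r1 (nw ! k)"
proof -
  have a: "\<forall>k<12. alg_word r0 r1 (nw ! (lmt 0 ! k)) = r0 * alg_word r0 r1 (nw ! k)"
    unfolding all12 by (simp add: lmt_def nw_def alg_word_def kbs)
  have b: "\<forall>k<12. alg_word r0 r1 (nw ! (lmt 1 ! k)) = r1 * alg_word r0 r1 (nw ! k)"
    unfolding all12 by (simp add: lmt_def nw_def alg_word_def kbs)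
  assume "k < 12"
  then show ?thesis using a b by (cases "i = 0") (simp_all add: lmt_def)
qed

lemma wnf_alg: "alg_word r0 r1 ws = alg_word r0 r1 (nw ! wnf ws)"
proof (induct ws)
  case Nil then show ?case by (simp add: nw_def)
next
  case (Cons i ws)
  then show ?case by (simp add: alg_Cons lmt_alg wnf_lt)
qed

lemma alg_cong: "g2_word a = g2_word b \<Longrightarrow> alg_word r0 r1 a = alg_word r0 r1 b"
proof -
  assume h: "g2_word a = g2_word b"
  have "wnf a = wnf b"
    by (rule nw_inj[OF wnf_lt wnf_lt]) (metis h wnf_g2)
  then show ?thesis by (metis wnf_alg)
qed

lemma stab_k:
  assumes i: "i \<in> {0,1}" and st: "g2_act (g2_word n) (g2_simple i) = g2_simple i"
  shows "(i = 0 \<and> (wnf n = 0 \<or> wnf n = 1 \<or> wnf n = 10 \<or> wnf n = 11)) \<or> (i = 1 \<and> (wnf n = 0 \<or> wnf n = 2 \<or> wnf n = 9 \<or> wnf n = 11))"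
proof -
  have a: "acttab i ! wnf n = g2_simple i" using st act_tab[OF wnf_lt i] wnf_g2[of n] by simp
  show ?thesis
  proof (cases "i = 0")
    case True then show ?thesis using a stab0[OF wnf_lt[of n]] by simp
  next
    case False then have "i = 1" using i by simp
    then show ?thesis using a stab1[OF wnf_lt[of n]] by simp
  qed
qed

lemma stabL:
  assumes i: "i \<in> {0,1}" and st: "g2_act (g2_word n) (g2_simple i) = g2_simple i"
  shows "\<exists>kn. alg_word r0 r1 n * (if i = 0 then e0 else e1) = (if i = 0 then e0 else e1) * alg_word r0 r1 kn
     \<and> g2_word kn \<in> G2_K i"
proof -
  have an: "alg_word r0 r1 n = alg_word r0 r1 (nw ! wnf n)" by (rule wnf_alg)
  have c0: "alg_word r0 r1 (nw ! k) * e0 = e0 * alg_word r0 r1 []" if "k = 0 \<or> k = 1 \<or> k = 10 \<or> k = 11" for k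
    using that by (auto simp: nw_def alg_word_def kbs mult.assoc)
  have c1: "alg_word r0 r1 (nw ! k) * e1 = e1 * alg_word r0 r1 []" if "k = 0 \<or> k = 2" for k
    using that by (auto simp: nw_def alg_word_def kbs mult.assoc)
  have c2: "alg_word r0 r1 (nw ! k) * e1 = e1 * alg_word r0 r1 [0,1,0,1,0]" if "k = 9 \<or> k = 11" for k
    using that by (auto simp: nw_def alg_word_def kbs mult.assoc)
  show ?thesis
  proof (cases "i = 0")
    case True
    then have "wnf n = 0 \<or> wnf n = 1 \<or> wnf n = 10 \<or> wnf n = 11" using stab_k[OF i st] by simp
    then show ?thesis using True c0[of "wnf n"] an K_nil[of 0] by auto
  next
    case False
    then have i1: "i = 1" using i by simp
    then have "wnf n = 0 \<or> wnf n = 2 \<or> wnf n = 9 \<or> wnf n = 11" using stab_k[OF i st] by simp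
    then show ?thesis using i1 c1[of "wnf n"] c2[of "wnf n"] an K_nil[of 1] K_five by (metis insertI1 insertI2 zero_neq_one)
  qed
qed

lemma stabR:
  assumes i: "i \<in> {0,1}" and st: "g2_act (g2_word n) (g2_simple i) = g2_simple i"
  shows "\<exists>v. (if i = 0 then e0 else e1) * alg_word r0 r1 (rev n) = (if i = 0 then e0 else e1) * alg_word r0 r1 v
     \<and> g2_word v \<in> G2_K i"
proof -
  have an: "alg_word r0 r1 (rev n) = alg_word r0 r1 (rev (nw ! wnf n))"
    by (rule alg_cong, rule g2_rev_cong, rule wnf_g2)
  have c0: "e0 * alg_word r0 r1 (rev (nw ! k)) = e0 * alg_word r0 r1 []" if "k = 0 \<or> k = 1 \<or> k = 10 \<or> k = 11" for k
    using that by (auto simp: nw_def alg_word_def kbs mult.assoc)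
  have c1: "e1 * alg_word r0 r1 (rev (nw ! k)) = e1 * alg_word r0 r1 []" if "k = 0 \<or> k = 2" for k
    using that by (auto simp: nw_def alg_word_def kbs mult.assoc)
  have c2: "e1 * alg_word r0 r1 (rev (nw ! k)) = e1 * alg_word r0 r1 [0,1,0,1,0]" if "k = 9 \<or> k = 11" for k
    using that by (auto simp: nw_def alg_word_def kbs mult.assoc)
  show ?thesis
  proof (cases "i = 0")
    case True
    then have "wnf n = 0 \<or> wnf n = 1 \<or> wnf n = 10 \<or> wnf n = 11" using stab_k[OF i st] by simp
    then show ?thesis using True c0[of "wnf n"] an K_nil[of 0] by auto
  next
    case False
    then have i1: "i = 1" using i by simp
    then have "wnf n = 0 \<or> wnf n = 2 \<or> wnf n = 9 \<or> wnf n = 11" using stab_k[OF i st] by simp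
    then show ?thesis using i1 c1[of "wnf n"] c2[of "wnf n"] an K_nil[of 1] K_five by (metis insertI1 insertI2 zero_neq_one)
  qed
qed

lemma translate:
  assumes i: "i \<in> {0,1}" and Di: "left_coset_reps (D i) (G2_N i)"
  shows "\<exists>wu wv ww. g2_word wu \<in> D i \<and> g2_word wv \<in> G2_K i \<and> g2_word ww \<in> op_set (D i) \<and>
    alg_word r0 r1 u * (if i = 0 then e0 else e1) * alg_word r0 r1 y
     = alg_word r0 r1 wu * (if i = 0 then e0 else e1) * alg_word r0 r1 wv * alg_word r0 r1 ww"
proof -
  let ?E = "if i = 0 then e0 else e1"
  let ?a = "alg_word r0 r1"
  from Di have Dsub: "D i \<subseteq> G2_W" and cos: "\<forall>w\<in>G2_W. \<exists>!d. d \<in> D i \<and> (\<exists>n\<in>G2_N i. w = d \<circ> n)"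
    by (auto simp: left_coset_reps_def)
  have cosE: "\<exists>d\<in>D i. \<exists>n\<in>G2_N i. g2_word w = d \<circ> n" for w
  proof -
    have "g2_word w \<in> G2_W" unfolding G2_W_def by blast
    then have "\<exists>!d. d \<in> D i \<and> (\<exists>n\<in>G2_N i. g2_word w = d \<circ> n)" by (rule bspec[OF cos])
    then show ?thesis by (metis ex1_implies_ex)
  qed
  have inW: "x \<in> G2_W \<Longrightarrow> \<exists>ws. x = g2_word ws" for x unfolding G2_W_def by blast
  have inN: "x \<in> G2_N i \<Longrightarrow> \<exists>ws. x = g2_word ws \<and> g2_act (g2_word ws) (g2_simple i) = g2_simple i" for x
    unfolding G2_N_def using inW by blast
  obtain dd n where dd: "dd \<in> D i" "n \<in> G2_N i" "g2_word u = dd \<circ> n" using cosE[of u] by blast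
  obtain wd where wd: "dd = g2_word wd" using Dsub dd(1) inW by blast
  obtain wn where wn: "n = g2_word wn" "g2_act (g2_word wn) (g2_simple i) = g2_simple i"
    using dd(2) inN by blast
  have gu: "g2_word u = g2_word (wd @ wn)" by (simp add: g2_word_append dd(3) wd wn(1))
  have au: "?a u = ?a wd * ?a wn" by (simp only: alg_cong[OF gu] alg_append)
  obtain kn where kn: "?a wn * ?E = ?E * ?a kn" "g2_word kn \<in> G2_K i" using stabL[OF i wn(2)] by blast
  define z where "z = kn @ y"
  obtain d2 n2 where d2: "d2 \<in> D i" "n2 \<in> G2_N i" "g2_word (rev z) = d2 \<circ> n2" using cosE[of "rev z"] by blast
  obtain wd2 where wd2: "d2 = g2_word wd2" using Dsub d2(1) inW by blast
  obtain wn2 where wn2: "n2 = g2_word wn2" "g2_act (g2_word wn2) (g2_simple i) = g2_simple i"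
    using d2(2) inN by blast
  have "g2_word (rev z) = g2_word (wd2 @ wn2)" by (simp add: g2_word_append d2(3) wd2 wn2(1))
  then have "g2_word (rev (rev z)) = g2_word (rev (wd2 @ wn2))" by (rule g2_rev_cong)
  then have gz: "g2_word z = g2_word (rev wn2 @ rev wd2)" by simp
  have az: "?a z = ?a (rev wn2) * ?a (rev wd2)" by (simp only: alg_cong[OF gz] alg_append)
  obtain v where v: "?E * ?a (rev wn2) = ?E * ?a v" "g2_word v \<in> G2_K i" using stabR[OF i wn2(2)] by blast
  have "?a u * ?E * ?a y = ?a wd * (?a wn * ?E) * ?a y" by (simp add: au mult.assoc)
  also have "... = ?a wd * ?E * ?a z" by (simp add: kn(1) z_def alg_append mult.assoc)
  also have "... = ?a wd * (?E * ?a (rev wn2)) * ?a (rev wd2)" by (simp add: az mult.assoc)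
  also have "... = ?a wd * ?E * ?a v * ?a (rev wd2)" by (simp add: v(1) mult.assoc)
  finally have eq: "?a u * ?E * ?a y = ?a wd * ?E * ?a v * ?a (rev wd2)" .
  have op: "g2_word (rev wd2) \<in> op_set (D i)"
  proof -
    have "g2_word (rev wd2) \<in> G2_W" unfolding G2_W_def by blast
    moreover have "g2_word (rev wd2) \<circ> d2 = id" using wd2 g2_rev[of wd2] by simp
    ultimately show ?thesis unfolding op_set_def using d2(1) by blast
  qed
  have "g2_word wd \<in> D i" using dd(1) wd by simp
  then show ?thesis using eq op v(2) by blast
qed

lemma brM_nf: "x \<in> brM d d' r0 r1 e0 e1 \<Longrightarrow> \<exists>k j. j < 39 \<and> x = dpow d d' k * w4 r0 r1 e0 e1 (nfw ! j)"
proof (induct rule: brM.induct)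
  case one
  show ?case by (rule exI[of _ 0], rule exI[of _ 0]) (simp add: dpow_zero nfw_def w4_def)
next
  case (gen x g)
  then obtain k j where kj: "j < 39" "x = dpow d d' k * w4 r0 r1 e0 e1 (nfw ! j)" by blast
  have L: "\<exists>k j. j < 39 \<and> lt r0 r1 e0 e1 a * x = dpow d d' k * w4 r0 r1 e0 e1 (nfw ! j)" if "a < 4" for a
  proof -
    have "lt r0 r1 e0 e1 a * x = lt r0 r1 e0 e1 a * (dpow d d' k * w4 r0 r1 e0 e1 (nfw ! j))"
      by (simp add: kj(2))
    also have "... = dpow d d' k * (lt r0 r1 e0 e1 a * w4 r0 r1 e0 e1 (nfw ! j))"
      by (simp only: mult.assoc[symmetric] dpow_cent[where x="lt r0 r1 e0 e1 a"])
    also have "... = dpow d d' (k + fst (tab a ! j)) * w4 r0 r1 e0 e1 (nfw ! snd (tab a ! j))"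
      using clos_all that kj(1) by (simp add: dpow_assoc)
    finally show ?thesis using tab_lt that kj(1) by blast
  qed
  from gen(3) show ?case
  proof (elim insertE emptyE)
    assume "g = d"
    then show ?case using kj by (intro exI[of _ "k+1"] exI[of _ j]) (simp add: dpow_succ mult.assoc)
  next
    assume "g = d'"
    then show ?case using kj by (intro exI[of _ "k-1"] exI[of _ j]) (simp add: dpow_pred mult.assoc)
  next
    assume "g = r0" then show ?case using L[of 0] by (simp add: lt_def)
  next
    assume "g = r1" then show ?case using L[of 1] by (simp add: lt_def)
  next
    assume "g = e0" then show ?case using L[of 2] by (simp add: lt_def)
  next
    assume "g = e1" then show ?case using L[of 3] by (simp add: lt_def)
  qed
qed

lemma main1:
  assumes D: "\<forall>i\<in>{0,1}. left_coset_reps (D i) (G2_N i)"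
  shows "\<forall>x\<in>brM d d' r0 r1 e0 e1.
            (\<exists>i\<in>{0::nat,1}. \<exists>wu wv ww k.
               g2_word wu \<in> D i \<and> g2_word wv \<in> G2_K i \<and> g2_word ww \<in> op_set (D i) \<and>
               x = dpow d d' k * alg_word r0 r1 wu * (if i = 0 then e0 else e1)
                   * alg_word r0 r1 wv * alg_word r0 r1 ww)
          \<or> (\<exists>wa k. x = dpow d d' k * alg_word r0 r1 wa)"
proof
  fix x assume "x \<in> brM d d' r0 r1 e0 e1"
  then obtain k j where kj: "j < 39" "x = dpow d d' k * w4 r0 r1 e0 e1 (nfw ! j)" using brM_nf by blast
  let ?s = "shp ! j"
  show "(\<exists>i\<in>{0::nat,1}. \<exists>wu wv ww k.
               g2_word wu \<in> D i \<and> g2_word wv \<in> G2_K i \<and> g2_word ww \<in> op_set (D i) \<and>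
               x = dpow d d' k * alg_word r0 r1 wu * (if i = 0 then e0 else e1)
                   * alg_word r0 r1 wv * alg_word r0 r1 ww)
          \<or> (\<exists>wa k. x = dpow d d' k * alg_word r0 r1 wa)"
  proof (cases "fst ?s = 0")
    case True
    then have "w4 r0 r1 e0 e1 (nfw ! j) = alg_word r0 r1 (fst (snd (snd ?s)))" using shp_all kj(1) by blast
    then have "x = dpow d d' k * alg_word r0 r1 (fst (snd (snd ?s)))" using kj(2) by simp
    then show ?thesis by blast
  next
    case False
    then have i: "fst (snd ?s) \<in> {0,1}" and
      w: "w4 r0 r1 e0 e1 (nfw ! j) = alg_word r0 r1 (fst (snd (snd ?s))) * (if fst (snd ?s) = 0 then e0 else e1)
          * alg_word r0 r1 (snd (snd (snd ?s)))" using shp_all kj(1) by blast+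
    obtain wu wv ww where t: "g2_word wu \<in> D (fst (snd ?s))" "g2_word wv \<in> G2_K (fst (snd ?s))"
      "g2_word ww \<in> op_set (D (fst (snd ?s)))"
      "alg_word r0 r1 (fst (snd (snd ?s))) * (if fst (snd ?s) = 0 then e0 else e1) * alg_word r0 r1 (snd (snd (snd ?s)))
       = alg_word r0 r1 wu * (if fst (snd ?s) = 0 then e0 else e1) * alg_word r0 r1 wv * alg_word r0 r1 ww"
      using translate[OF i, of D] D i by blast
    have "x = dpow d d' k * alg_word r0 r1 wu * (if fst (snd ?s) = 0 then e0 else e1) * alg_word r0 r1 wv * alg_word r0 r1 ww"
      using kj(2) w t(4) by (simp add: mult.assoc)
    then show ?thesis using t(1-3) i by blast
  qed
qed



lemma L_central: "s \<in> laurent_scalars d d' \<Longrightarrow> s * x = x * s"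
proof (induct s arbitrary: x rule: laurent_scalars.induct)
  case one then show ?case by simp
next
  case d then show ?case by (rule dcent)
next
  case d' then show ?case by (rule d'cent)
next
  case (neg s) then show ?case by simp
next
  case (add s t) then show ?case by (simp add: distrib_left distrib_right)
next
  case (mult s t)
  have ht: "t * x = x * t" by (rule mult(4))
  have hs: "s * x = x * s" by (rule mult(2))
  have "s * t * x = s * (t * x)" by (rule mult.assoc)
  also have "... = s * (x * t)" by (simp only: ht)
  also have "... = (s * x) * t" by (rule mult.assoc[symmetric])
  also have "... = (x * s) * t" by (simp only: hs)
  also have "... = x * (s * t)" by (rule mult.assoc)
  finally show ?case .
qed

lemma dpow_L: "dpow d d' k \<in> laurent_scalars d d'"
proof -
  have a: "d ^ n \<in> laurent_scalars d d'" for n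
    by (induct n) (auto intro: laurent_scalars.intros)
  have b: "d' ^ n \<in> laurent_scalars d d'" for n
    by (induct n) (auto intro: laurent_scalars.intros)
  show ?thesis using a b by (simp add: dpow_def)
qed

lemma zero_L: "0 \<in> laurent_scalars d d'"
proof -
  have "1 + - 1 \<in> laurent_scalars d d'" by (intro laurent_scalars.intros)
  then show ?thesis by simp
qed

lemma sp_zero: "sp d d' r0 r1 e0 e1 0"
  unfolding sp_def by (rule exI[of _ "\<lambda>_. 0"]) (simp add: zero_L)

lemma sp_add: "sp d d' r0 r1 e0 e1 x \<Longrightarrow> sp d d' r0 r1 e0 e1 y \<Longrightarrow> sp d d' r0 r1 e0 e1 (x + y)"
  unfolding sp_def
proof (elim exE conjE)
  fix c c' assume c: "\<forall>j<39. c j \<in> laurent_scalars d d'" "x = (\<Sum>j<39. c j * w4 r0 r1 e0 e1 (nfw ! j))"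
    and c': "\<forall>j<39. c' j \<in> laurent_scalars d d'" "y = (\<Sum>j<39. c' j * w4 r0 r1 e0 e1 (nfw ! j))"
  show "\<exists>c. (\<forall>j<39. c j \<in> laurent_scalars d d') \<and> x + y = (\<Sum>j<39. c j * w4 r0 r1 e0 e1 (nfw ! j))"
    by (rule exI[of _ "\<lambda>j. c j + c' j"])
       (simp add: c c' laurent_scalars.add distrib_right sum.distrib)
qed

lemma sp_neg: "sp d d' r0 r1 e0 e1 x \<Longrightarrow> sp d d' r0 r1 e0 e1 (- x)"
  unfolding sp_def
proof (elim exE conjE)
  fix c assume c: "\<forall>j<39. c j \<in> laurent_scalars d d'" "x = (\<Sum>j<39. c j * w4 r0 r1 e0 e1 (nfw ! j))"
  show "\<exists>c. (\<forall>j<39. c j \<in> laurent_scalars d d') \<and> - x = (\<Sum>j<39. c j * w4 r0 r1 e0 e1 (nfw ! j))"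
    by (rule exI[of _ "\<lambda>j. - c j"])
       (simp add: c laurent_scalars.neg sum_negf)
qed

lemma sp_scal: "s \<in> laurent_scalars d d' \<Longrightarrow> sp d d' r0 r1 e0 e1 x \<Longrightarrow> sp d d' r0 r1 e0 e1 (s * x)"
  unfolding sp_def
proof (elim exE conjE)
  fix c assume s: "s \<in> laurent_scalars d d'" and c: "\<forall>j<39. c j \<in> laurent_scalars d d'" "x = (\<Sum>j<39. c j * w4 r0 r1 e0 e1 (nfw ! j))"
  show "\<exists>c. (\<forall>j<39. c j \<in> laurent_scalars d d') \<and> s * x = (\<Sum>j<39. c j * w4 r0 r1 e0 e1 (nfw ! j))"
    by (rule exI[of _ "\<lambda>j. s * c j"])
       (simp add: c s laurent_scalars.mult sum_distrib_left mult.assoc)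
qed

lemma sp_basis: "j < 39 \<Longrightarrow> sp d d' r0 r1 e0 e1 (w4 r0 r1 e0 e1 (nfw ! j))"
  unfolding sp_def
proof (rule exI[of _ "\<lambda>l. if l = j then 1 else 0"], intro conjI)
  assume j: "j < 39"
  show "\<forall>l<39. (if l = j then 1 else 0) \<in> laurent_scalars d d'"
    by (simp add: zero_L laurent_scalars.one)
  have "(\<Sum>l<39. (if l = j then 1 else 0) * w4 r0 r1 e0 e1 (nfw ! l))
      = (\<Sum>l<39. if l = j then w4 r0 r1 e0 e1 (nfw ! l) else 0)"
    by (rule sum.cong) auto
  also have "... = w4 r0 r1 e0 e1 (nfw ! j)" using j by (simp add: sum.delta')
  finally show "w4 r0 r1 e0 e1 (nfw ! j) = (\<Sum>l<39. (if l = j then 1 else 0) * w4 r0 r1 e0 e1 (nfw ! l))" by simp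
qed

lemma sp_brM: "x \<in> brM d d' r0 r1 e0 e1 \<Longrightarrow> sp d d' r0 r1 e0 e1 x"
  using brM_nf sp_scal dpow_L sp_basis by metis

lemma sp_sum: "finite A \<Longrightarrow> (\<forall>a\<in>A. sp d d' r0 r1 e0 e1 (f a)) \<Longrightarrow> sp d d' r0 r1 e0 e1 (sum f A)"
  by (induct A rule: finite_induct) (simp_all add: sp_zero sp_add)

lemma brM_mult: "x \<in> brM d d' r0 r1 e0 e1 \<Longrightarrow> y \<in> brM d d' r0 r1 e0 e1 \<Longrightarrow> x * y \<in> brM d d' r0 r1 e0 e1"
  by (induct rule: brM.induct) (simp_all add: mult.assoc brM.gen)

lemma w4_brM: "w4 r0 r1 e0 e1 ws \<in> brM d d' r0 r1 e0 e1"
proof (induct ws)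
  case Nil then show ?case by (simp add: w4_def brM.one)
next
  case (Cons a ws)
  have "lt r0 r1 e0 e1 a \<in> {d, d', r0, r1, e0, e1}" by (simp add: lt_def)
  then show ?case using Cons brM.gen by (simp add: w4_def)
qed

lemma sp_Bmul: "sp d d' r0 r1 e0 e1 y \<Longrightarrow> sp d d' r0 r1 e0 e1 (w4 r0 r1 e0 e1 (nfw ! j) * y)"
proof -
  assume "sp d d' r0 r1 e0 e1 y"
  then obtain c where c: "\<forall>l<39. c l \<in> laurent_scalars d d'" "y = (\<Sum>l<39. c l * w4 r0 r1 e0 e1 (nfw ! l))"
    unfolding sp_def by blast
  have "w4 r0 r1 e0 e1 (nfw ! j) * y = (\<Sum>l<39. w4 r0 r1 e0 e1 (nfw ! j) * (c l * w4 r0 r1 e0 e1 (nfw ! l)))"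
    by (simp add: c(2) sum_distrib_left)
  also have "... = (\<Sum>l<39. c l * (w4 r0 r1 e0 e1 (nfw ! j) * w4 r0 r1 e0 e1 (nfw ! l)))"
  proof (rule sum.cong)
    fix l assume "l \<in> {..<39::nat}"
    then have "c l * w4 r0 r1 e0 e1 (nfw ! j) = w4 r0 r1 e0 e1 (nfw ! j) * c l" using c(1) L_central by auto
    then show "w4 r0 r1 e0 e1 (nfw ! j) * (c l * w4 r0 r1 e0 e1 (nfw ! l)) = c l * (w4 r0 r1 e0 e1 (nfw ! j) * w4 r0 r1 e0 e1 (nfw ! l))"
      by (simp add: mult.assoc[symmetric])
  qed simp
  also have "sp d d' r0 r1 e0 e1 ..."
  proof (rule sp_sum)
    show "\<forall>l\<in>{..<39}. sp d d' r0 r1 e0 e1 (c l * (w4 r0 r1 e0 e1 (nfw ! j) * w4 r0 r1 e0 e1 (nfw ! l)))"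
      using c(1) by (auto intro!: sp_scal[OF _ sp_brM[OF brM_mult[OF w4_brM w4_brM]]])
  qed simp
  finally show ?thesis .
qed

lemma sp_mult: "sp d d' r0 r1 e0 e1 x \<Longrightarrow> sp d d' r0 r1 e0 e1 y \<Longrightarrow> sp d d' r0 r1 e0 e1 (x * y)"
proof -
  assume "sp d d' r0 r1 e0 e1 x" and y: "sp d d' r0 r1 e0 e1 y"
  then obtain c where c: "\<forall>l<39. c l \<in> laurent_scalars d d'" "x = (\<Sum>l<39. c l * w4 r0 r1 e0 e1 (nfw ! l))"
    unfolding sp_def by blast
  have "x * y = (\<Sum>l<39. c l * (w4 r0 r1 e0 e1 (nfw ! l) * y))"
    by (simp add: c(2) sum_distrib_right mult.assoc)
  also have "sp d d' r0 r1 e0 e1 ..."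
  proof (rule sp_sum)
    show "\<forall>l\<in>{..<39}. sp d d' r0 r1 e0 e1 (c l * (w4 r0 r1 e0 e1 (nfw ! l) * y))"
      using c(1) y by (auto intro!: sp_scal[OF _ sp_Bmul])
  qed simp
  finally show ?thesis .
qed

lemma gen_sp: "x \<in> gen_alg d d' r0 r1 e0 e1 \<Longrightarrow> sp d d' r0 r1 e0 e1 x"
proof (induct rule: gen_alg.induct)
  case (base g)
  have "g \<in> brM d d' r0 r1 e0 e1"
  proof (cases "g = 1")
    case True then show ?thesis by (simp add: brM.one)
  next
    case False
    then have "g \<in> {d, d', r0, r1, e0, e1}" using base by simp
    then have "g * 1 \<in> brM d d' r0 r1 e0 e1" by (rule brM.gen[OF brM.one])
    then show ?thesis by simp
  qed
  then show ?case by (rule sp_brM)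
next
  case (neg x) from neg(2) show ?case by (rule sp_neg)
next
  case (add x y) from add(2) add(4) show ?case by (rule sp_add)
next
  case (mult x y) from mult(2) mult(4) show ?case by (rule sp_mult)
qed

lemma main2: "\<exists>b :: nat \<Rightarrow> 'a. \<forall>x\<in>gen_alg d d' r0 r1 e0 e1.
            \<exists>c. (\<forall>j<39. c j \<in> laurent_scalars d d') \<and> x = (\<Sum>j<39. c j * b j)"
proof (rule exI[of _ "\<lambda>j. w4 r0 r1 e0 e1 (nfw ! j)"], intro ballI)
  fix x assume "x \<in> gen_alg d d' r0 r1 e0 e1"
  then have "sp d d' r0 r1 e0 e1 x" by (rule gen_sp)
  then show "\<exists>c. (\<forall>j<39. c j \<in> laurent_scalars d d') \<and> x = (\<Sum>j<39. c j * w4 r0 r1 e0 e1 (nfw ! j))"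
    unfolding sp_def .
qed

end

theorem lemma9p7:
  fixes d d' r0 r1 e0 e1 :: "'a::ring_1"
    and D :: "nat \<Rightarrow> (int \<times> int \<Rightarrow> int \<times> int) set"
  assumes rels: "br_G2_rels d d' r0 r1 e0 e1"
    and D: "\<forall>i\<in>{0,1}. left_coset_reps (D i) (G2_N i)"
  shows "(\<forall>x\<in>brM d d' r0 r1 e0 e1.
            (\<exists>i\<in>{0::nat,1}. \<exists>wu wv ww k.
               g2_word wu \<in> D i \<and> g2_word wv \<in> G2_K i \<and> g2_word ww \<in> op_set (D i) \<and>
               x = dpow d d' k * alg_word r0 r1 wu * (if i = 0 then e0 else e1)
                   * alg_word r0 r1 wv * alg_word r0 r1 ww)
          \<or> (\<exists>wa k. x = dpow d d' k * alg_word r0 r1 wa))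
       \<and> (\<exists>b :: nat \<Rightarrow> 'a. \<forall>x\<in>gen_alg d d' r0 r1 e0 e1.
            \<exists>c. (\<forall>j<39. c j \<in> laurent_scalars d d') \<and> x = (\<Sum>j<39. c j * b j))"
  using main1[OF rels D] main2[OF rels] by blast

end
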